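(* Let $S$ be a commutative ring, $p,q\in S$, $A=\begin{pmatrix}0&q\\-p&0\end{pmatrix}\in R=\mathbb{M}_2(S)$, and let $c\in S$ be a non-zero-divisor. The following are equivalent: (1) $c\in V[p,q]$, i.e. $c=pr^2+qs^2$ for some $r,s\in S$; (2) there exist $X,Y\in R$ with $XY=cA$, $\det(X)=cp$, $\det(Y)=cq$, and $\det[X,Y]=-c^2$; (3) there exist $X_1,Y_1\in R$ with $X_1Y_1=cA$, $\det(X_1)=cq$, $\det(Y_1)=cp$, and $\det[X_1,Y_1]=-c^2$. (The implications (1)⇒(2) and (2)⇒(3) hold without assuming $c$ is a non-zero-divisor.)
   Context: $[X,Y]=XY-YX$. $V[p,q]=\{pr_1^2+qr_2^2: r_1,r_2\in S\}$. *)

theory Defs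
  imports "HOL-Analysis.Analysis"
begin

definition commutator :: "'a::comm_ring_1 ^ 'n ^ 'n \<Rightarrow> 'a ^ 'n ^ 'n \<Rightarrow> 'a ^ 'n ^ 'n" where
  "commutator X Y = X ** Y - Y ** X"

definition Vset :: "'a::comm_ring_1 \<Rightarrow> 'a \<Rightarrow> 'a set" where
  "Vset p q = {p * r1^2 + q * r2^2 | r1 r2. True}"

definition matA :: "'a::comm_ring_1 \<Rightarrow> 'a \<Rightarrow> 'a ^ 2 ^ 2" where
  "matA p q = vector [vector [0, q], vector [- p, 0]]"

definition non_zero_divisor :: "'a::comm_ring_1 \<Rightarrow> bool" where
  "non_zero_divisor c \<longleftrightarrow> (\<forall>x. c * x = 0 \<longrightarrow> x = 0)"

definition smult_mat :: "'a::comm_ring_1 \<Rightarrow> 'a ^ 'n ^ 'm \<Rightarrow> 'a ^ 'n ^ 'm" where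
  "smult_mat c A = (\<chi> i j. c * A $ i $ j)"

end

theory Submission
  imports Defs
begin

definition mk :: "'a \<Rightarrow> 'a \<Rightarrow> 'a \<Rightarrow> 'a \<Rightarrow> 'a::comm_ring_1 ^ 2 ^ 2" where
  "mk a b d e = vector [vector [a, b], vector [d, e]]"

lemma mk_simps[simp]: "mk a b d e $1$1 = a" "mk a b d e $1$2 = b"
  "mk a b d e $2$1 = d" "mk a b d e $2$2 = e"
  by (simp_all add: mk_def)

lemma mat_eq2: "(X::'a::comm_ring_1^2^2) = Y \<longleftrightarrow>
   X$1$1 = Y$1$1 \<and> X$1$2 = Y$1$2 \<and> X$2$1 = Y$2$1 \<and> X$2$2 = Y$2$2"
  by (auto simp: vec_eq_iff forall_2)

lemma mult2: "((X::'a::comm_ring_1^2^2) ** Y) $ i $ j = X$i$1 * Y$1$j + X$i$2 * Y$2$j"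
  by (simp add: matrix_matrix_mult_def sum_2)

lemma conds:
  fixes X Y :: "'a::comm_ring_1^2^2"
  shows "(X ** Y = smult_mat c (matA p q) \<and> det X = u \<and> det Y = v \<and> det (commutator X Y) = w)
   \<longleftrightarrow> (let a = X$1$1; b = X$1$2; d = X$2$1; e = X$2$2;
            f = Y$1$1; g = Y$1$2; h = Y$2$1; k = Y$2$2 in
        a*f + b*h = 0 \<and> a*g + b*k = c*q \<and> d*f + e*h = -(c*p) \<and> d*g + e*k = 0 \<and>
        a*e - b*d = u \<and> f*k - g*h = v \<and>
        ((a*f + b*h) - (f*a + g*d)) * ((d*g + e*k) - (h*b + k*e))
          - ((a*g + b*k) - (f*b + g*e)) * ((d*f + e*h) - (h*a + k*d)) = w)"
  unfolding mat_eq2 det_2 commutator_def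
  by (simp add: mult2 smult_mat_def matA_def Let_def)

lemma swap:
  fixes X Y :: "'a::comm_ring_1^2^2"
  assumes "X ** Y = smult_mat c (matA p q)" "det X = u" "det Y = v" "det (commutator X Y) = w"
  shows "\<exists>X1 Y1 :: 'a^2^2. X1 ** Y1 = smult_mat c (matA p q) \<and> det X1 = v \<and> det Y1 = u
     \<and> det (commutator X1 Y1) = w"
proof -
  define a b d e f g h k where "a = X$1$1" "b = X$1$2" "d = X$2$1" "e = X$2$2"
    "f = Y$1$1" "g = Y$1$2" "h = Y$2$1" "k = Y$2$2"
  have H: "a*f + b*h = 0 \<and> a*g + b*k = c*q \<and> d*f + e*h = -(c*p) \<and> d*g + e*k = 0 \<and>
        a*e - b*d = u \<and> f*k - g*h = v \<and>
        ((a*f + b*h) - (f*a + g*d)) * ((d*g + e*k) - (h*b + k*e))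
          - ((a*g + b*k) - (f*b + g*e)) * ((d*f + e*h) - (h*a + k*d)) = w"
    using assms conds[of X Y c p q u v w] unfolding a_b_d_e_f_g_h_k_def Let_def by blast
  show ?thesis
    apply (rule exI[of _ "mk k g h f"], rule exI[of _ "mk e b d a"])
    unfolding conds Let_def mk_simps
  proof (intro conjI)
    have "((k*e + g*d) - (e*k + b*h)) * ((h*b + f*a) - (d*g + a*f))
          - ((k*b + g*a) - (e*g + b*f)) * ((h*e + f*d) - (d*k + a*h)) =
        ((a*f + b*h) - (f*a + g*d)) * ((d*g + e*k) - (h*b + k*e))
          - ((a*g + b*k) - (f*b + g*e)) * ((d*f + e*h) - (h*a + k*d))"
      by (simp add: algebra_simps)
    moreover have HW: "((a*f + b*h) - (f*a + g*d)) * ((d*g + e*k) - (h*b + k*e))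
          - ((a*g + b*k) - (f*b + g*e)) * ((d*f + e*h) - (h*a + k*d)) = w" using H by blast
    ultimately show "((k*e + g*d) - (e*k + b*h)) * ((h*b + f*a) - (d*g + a*f))
          - ((k*b + g*a) - (e*g + b*f)) * ((h*e + f*d) - (d*k + a*h)) = w" by (rule trans)
  qed (use H in \<open>simp_all add: algebra_simps\<close>)
qed

lemma one_two:
  fixes p q c :: "'a::comm_ring_1"
  assumes "c \<in> Vset p q"
  shows "\<exists>X Y :: 'a ^ 2 ^ 2. X ** Y = smult_mat c (matA p q) \<and> det X = c * p \<and>
               det Y = c * q \<and> det (commutator X Y) = - (c^2)"
proof -
  obtain r s where c: "c = p * r^2 + q * s^2" using assms unfolding Vset_def by blast
  show ?thesis
    apply (rule exI[of _ "mk (p * r+s) (q * s-r) (0 - p * s) (p * r)"],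
           rule exI[of _ "mk (q * s-r) (q * r) (0 - (p * r+s)) (q * s)"])
    unfolding conds Let_def mk_simps c
    by (intro conjI; simp add: algebra_simps power2_eq_square)
qed

lemma alg1: fixes a b c d e f h p :: "'a::comm_ring_1"
  assumes "a*f + b*h = 0" "d*f + e*h = -(c*p)" "a*e - b*d = c*p" shows "c*(p*f - p*b) = 0"
proof -
  have "c*(p*f - p*b) = - f*((a*e - b*d) - c*p) - b*((d*f + e*h) + c*p) + e*(a*f + b*h)"
    by (simp add: algebra_simps)
  also have "\<dots> = 0" using assms by simp
  finally show ?thesis .
qed
lemma alg2: fixes a b c d e g k p q :: "'a::comm_ring_1"
  assumes "a*g + b*k = c*q" "d*g + e*k = 0" "a*e - b*d = c*p" shows "c*(p*g - q*e) = 0"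
proof -
  have "c*(p*g - q*e) = g*(c*p - (a*e - b*d)) - e*(c*q - (a*g + b*k)) - b*(d*g + e*k)"
    by (simp add: algebra_simps)
  also have "\<dots> = 0" using assms by simp
  finally show ?thesis .
qed
lemma alg3: fixes a b c f g h k q :: "'a::comm_ring_1"
  assumes "a*f + b*h = 0" "a*g + b*k = c*q" "f*k - g*h = c*q" shows "c*(q*h + q*a) = 0"
proof -
  have "c*(q*h + q*a) = a*(c*q - (f*k - g*h)) + k*(a*f + b*h) + h*(c*q - (a*g + b*k))"
    by (simp add: algebra_simps)
  also have "\<dots> = 0" using assms by simp
  finally show ?thesis .
qed
lemma alg4: fixes c d e f g h k p q :: "'a::comm_ring_1"
  assumes "d*f + e*h = -(c*p)" "d*g + e*k = 0" "f*k - g*h = c*q" shows "c*(q*d + p*k) = 0"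
proof -
  have "c*(q*d + p*k) = d*(c*q - (f*k - g*h)) + k*(c*p + (d*f + e*h)) - h*(d*g + e*k)"
    by (simp add: algebra_simps)
  also have "\<dots> = 0" using assms by simp
  finally show ?thesis .
qed
lemma alg5: fixes a b c d e f g h k p q :: "'a::comm_ring_1"
  assumes h1: "a*f + b*h = 0" and h2: "a*g + b*k = c*q" and h3: "d*f + e*h = -(c*p)"
   and h4: "d*g + e*k = 0" and h5: "a*e - b*d = c*p" and h6: "f*k - g*h = c*q"
   and h7: "((a*f + b*h) - (f*a + g*d)) * ((d*g + e*k) - (h*b + k*e))
          - ((a*g + b*k) - (f*b + g*e)) * ((d*f + e*h) - (h*a + k*d)) = -(c^2)"
  shows "c*(p*(f*b+g*e) - q*(h*a+k*d) - c - 2*c*p*q) = 0"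
proof -
  define A B U W where "A = f*a+g*d" "B = h*b+k*e" "U = f*b+g*e" "W = h*a+k*d"
  have T: "(0 - A)*(0 - B) - (c*q - U)*(-(c*p) - W) = -(c^2)"
    using h7 unfolding h1 h2 h3 h4 A_B_U_W_def .
  have "A*B - U*W = (f*k - g*h)*(a*e - b*d)" unfolding A_B_U_W_def by (simp add: algebra_simps)
  then have I: "A*B - U*W = (c*q)*(c*p)" unfolding h5 h6 .
  have "c*(p*U - q*W - c - 2*c*p*q) = (A*B - U*W - (c*q)*(c*p))
      - (((0 - A)*(0 - B) - (c*q - U)*(-(c*p) - W)) + c^2)"
    by (simp add: algebra_simps power2_eq_square)
  also have "\<dots> = 0" using T I by simp
  finally show ?thesis unfolding A_B_U_W_def .
qed
lemma alg6: fixes a b c d e f g h k p q :: "'a::comm_ring_1"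
  assumes tr: "p*(f*b+g*e) - q*(h*a+k*d) = c + 2*c*p*q" and r1: "p*f = p*b" and r2: "p*g = q*e"
   and r3: "q*h = -(q*a)" and r4: "q*d = -(p*k)" and h5: "a*e - b*d = c*p"
  shows "c = p * (b-k)^2 + q * (a-e)^2"
proof -
  have "p * (b-k)^2 + q * (a-e)^2 - c =
     (p*(f*b+g*e) - q*(h*a+k*d) - (c + 2*c*p*q)) + b*(p*b - p*f) + e*(q*e - p*g)
     + a*(q*h + q*a) + k*(q*d + p*k) - 2*b*(q*d + p*k) + 2*q*(c*p - (a*e - b*d))"
    by (simp add: algebra_simps power2_eq_square)
  also have "\<dots> = 0" using assms by simp
  finally show ?thesis by simp
qed

lemma two_one:
  fixes p q c :: "'a::comm_ring_1"
  and X Y :: "'a^2^2"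
  assumes nz: "non_zero_divisor c"
  and A: "X ** Y = smult_mat c (matA p q)" "det X = c * p" "det Y = c * q"
     "det (commutator X Y) = - (c^2)"
  shows "c \<in> Vset p q"
proof -
  have canc: "\<And>x. c * x = 0 \<Longrightarrow> x = 0" using nz unfolding non_zero_divisor_def by blast
  define a b d e f g h k where "a = X$1$1" "b = X$1$2" "d = X$2$1" "e = X$2$2"
    "f = Y$1$1" "g = Y$1$2" "h = Y$2$1" "k = Y$2$2"
  have H: "a*f + b*h = 0 \<and> a*g + b*k = c*q \<and> d*f + e*h = -(c*p) \<and> d*g + e*k = 0 \<and>
        a*e - b*d = c*p \<and> f*k - g*h = c*q \<and>
        ((a*f + b*h) - (f*a + g*d)) * ((d*g + e*k) - (h*b + k*e))
          - ((a*g + b*k) - (f*b + g*e)) * ((d*f + e*h) - (h*a + k*d)) = -(c^2)"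
    using A conds[of X Y c p q "c*p" "c*q" "-(c^2)"] unfolding a_b_d_e_f_g_h_k_def Let_def by blast
  then have h1: "a*f + b*h = 0" and h2: "a*g + b*k = c*q" and h3: "d*f + e*h = -(c*p)"
    and h4: "d*g + e*k = 0" and h5: "a*e - b*d = c*p" and h6: "f*k - g*h = c*q"
    and h7: "((a*f + b*h) - (f*a + g*d)) * ((d*g + e*k) - (h*b + k*e))
          - ((a*g + b*k) - (f*b + g*e)) * ((d*f + e*h) - (h*a + k*d)) = -(c^2)"
    by blast+
  have "c*(p*f - p*b) = 0" by (rule alg1[OF h1 h3 h5])
  then have r1: "p*f = p*b" using canc by fastforce
  have "c*(p*g - q*e) = 0" by (rule alg2[OF h2 h4 h5])
  then have r2: "p*g = q*e" using canc by fastforce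
  have "c*(q*h + q*a) = 0" by (rule alg3[OF h1 h2 h6])
  from canc[OF this] have r3: "q*h = -(q*a)" by (simp add: eq_neg_iff_add_eq_0)
  have "c*(q*d + p*k) = 0" by (rule alg4[OF h3 h4 h6])
  from canc[OF this] have r4: "q*d = -(p*k)" by (simp add: eq_neg_iff_add_eq_0)
  have "c*(p*(f*b+g*e) - q*(h*a+k*d) - c - 2*c*p*q) = 0"
    by (rule alg5[OF h1 h2 h3 h4 h5 h6 h7])
  from canc[OF this] have tr: "p*(f*b+g*e) - q*(h*a+k*d) = c + 2*c*p*q" by (simp add: algebra_simps)
  have "c = p * (b-k)^2 + q * (a-e)^2"
    by (rule alg6[OF tr r1 r2 r3 r4 h5])
  then show ?thesis unfolding Vset_def by blast
qed

theorem theorem6p3: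
  fixes p q c :: "'a::comm_ring_1"
  shows "(c \<in> Vset p q \<longrightarrow>
            (\<exists>X Y :: 'a ^ 2 ^ 2. X ** Y = smult_mat c (matA p q) \<and> det X = c * p \<and>
               det Y = c * q \<and> det (commutator X Y) = - (c^2)))
       \<and> ((\<exists>X Y :: 'a ^ 2 ^ 2. X ** Y = smult_mat c (matA p q) \<and> det X = c * p \<and>
               det Y = c * q \<and> det (commutator X Y) = - (c^2)) \<longrightarrow>
            (\<exists>X1 Y1 :: 'a ^ 2 ^ 2. X1 ** Y1 = smult_mat c (matA p q) \<and> det X1 = c * q \<and>
               det Y1 = c * p \<and> det (commutator X1 Y1) = - (c^2)))
       \<and> (non_zero_divisor c \<longrightarrow>
            ((c \<in> Vset p q) \<longleftrightarrow>
               (\<exists>X Y :: 'a ^ 2 ^ 2. X ** Y = smult_mat c (matA p q) \<and> det X = c * p \<and>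
                 det Y = c * q \<and> det (commutator X Y) = - (c^2)))
          \<and> ((c \<in> Vset p q) \<longleftrightarrow>
               (\<exists>X1 Y1 :: 'a ^ 2 ^ 2. X1 ** Y1 = smult_mat c (matA p q) \<and> det X1 = c * q \<and>
                 det Y1 = c * p \<and> det (commutator X1 Y1) = - (c^2))))"
proof -
  let ?P2 = "\<exists>X Y :: 'a ^ 2 ^ 2. X ** Y = smult_mat c (matA p q) \<and> det X = c * p \<and>
               det Y = c * q \<and> det (commutator X Y) = - (c^2)"
  let ?P3 = "\<exists>X1 Y1 :: 'a ^ 2 ^ 2. X1 ** Y1 = smult_mat c (matA p q) \<and> det X1 = c * q \<and>
               det Y1 = c * p \<and> det (commutator X1 Y1) = - (c^2)"
  have i12: "c \<in> Vset p q \<longrightarrow> ?P2" using one_two by blast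
  have i23: "?P2 \<longrightarrow> ?P3" using swap by blast
  have i32: "?P3 \<longrightarrow> ?P2" using swap by blast
  have i21: "non_zero_divisor c \<longrightarrow> ?P2 \<longrightarrow> c \<in> Vset p q" using two_one by blast
  show ?thesis using i12 i23 i32 i21 by blast
qed

end
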